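(* For any $\mathfrak{Q}$-distributors $\phi,\psi$ from $X$ to $Y$ between $\mathfrak{Q}$-preordered $\mathfrak{Q}$-subsets, $$\phi=\psi\iff\phi_{\uparrow}=\psi_{\uparrow}\iff\phi^{\downarrow}=\psi^{\downarrow}\iff\phi^{*}=\psi^{*}\iff\phi^{\dagger}=\psi^{\dagger}.$$
   Context: $(\mathfrak{Q},\&,e)$ is a non-trivial unital quantale (complete lattice with associative multiplication with unit $e$ preserving joins in each variable, $\bot<e$), implications $p\& q\le r\iff p\le r/ q\iff q\le p\backslash r$, $\mathcal{D}\mathfrak{Q}(p,q)=\{u\mid (u/ p)\& p=u=q\&(q\backslash u)\}$. A $\mathfrak{Q}$-subset is a set with $|\cdot|\colon X\to\mathfrak{Q}$; $\mathbf{1}_q$ is $\{*\}$ with $|*|=q$. A $\mathfrak{Q}$-relation from $X$ to $Y$ is a map $\phi\colon X\times Y\to\mathfrak{Q}$ with $\phi(x,y)\in\mathcal{D}\mathfrak{Q}(|x|,|y|)$, ordered pointwise; composition $(\psi\circ\phi)(x,z)=\bigvee_y(\psi(y,z)/|y|)\&\phi(x,y)$; $\xi\swarrow\phi$ is the largest $\psi'$ with $\psi'\circ\phi\le\xi$ and $\psi\searrow\xi$ the largest $\phi'$ with $\psi\circ\phi'\le\xi$. A $\mathfrak{Q}$-preordered $\mathfrak{Q}$-subset is a $\mathfrak{Q}$-subset $X$ with a $\mathfrak{Q}$-relation $1_X^{\natural}$ on $X$ with $\mathrm{id}_X\le 1_X^{\natural}$ ($\mathrm{id}_X(x,x)=|x|$,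 else $\bot$) and $1_X^{\natural}\circ 1_X^{\natural}\le 1_X^{\natural}$. A $\mathfrak{Q}$-distributor from $X$ to $Y$ is a $\mathfrak{Q}$-relation $\phi$ with $1_Y^{\natural}\circ\phi\circ 1_X^{\natural}\le\phi$. $\mathsf{P}X$ is the set of $\mathfrak{Q}$-relations $\mu$ from $X$ to some $\mathbf{1}_q$ with $\mu\circ 1_X^{\natural}\le\mu$; $\mathsf{P}^{\dagger}X$ is the set of $\mathfrak{Q}$-relations $\lambda$ from some $\mathbf{1}_q$ to $X$ with $1_X^{\natural}\circ\lambda\le\lambda$. For a $\mathfrak{Q}$-distributor $\phi$ from $X$ to $Y$: $\phi_{\uparrow}\colon\mathsf{P}X\to\mathsf{P}^{\dagger}Y$, $\mu\mapsto\phi\swarrow\mu$; $\phi^{\downarrow}\colon\mathsf{P}^{\dagger}Y\to\mathsf{P}X$, $\lambda'\mapsto\lambda'\searrow\phi$; $\phi^{*}\colon\mathsf{P}Y\to\mathsf{P}X$, $\mu'\mapsto\mu'\circ\phi$; $\phi^{\dagger}\colon\mathsf{P}^{\dagger}X\to\mathsf{P}^{\dagger}Y$, $\lambda\mapsto\phi\circ\lambda$. *)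

theory Defs
  imports Main
begin

definition unital_quantale :: "('q::complete_lattice \<Rightarrow> 'q \<Rightarrow> 'q) \<Rightarrow> 'q \<Rightarrow> bool" where
  "unital_quantale m e \<longleftrightarrow>
     (\<forall>a b c. m (m a b) c = m a (m b c)) \<and>
     (\<forall>a. m e a = a \<and> m a e = a) \<and>
     (\<forall>a S. m a (Sup S) = Sup ((\<lambda>b. m a b) ` S)) \<and>
     (\<forall>a S. m (Sup S) a = Sup ((\<lambda>b. m b a) ` S)) \<and>
     bot < e"

definition rres :: "('q::complete_lattice \<Rightarrow> 'q \<Rightarrow> 'q) \<Rightarrow> 'q \<Rightarrow> 'q \<Rightarrow> 'q" where
  "rres m r q = Sup {p. m p q \<le> r}"

definition lres :: "('q::complete_lattice \<Rightarrow> 'q \<Rightarrow> 'q) \<Rightarrow> 'q \<Rightarrow> 'q \<Rightarrow> 'q" where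
  "lres m p r = Sup {q. m p q \<le> r}"

definition DQ :: "('q::complete_lattice \<Rightarrow> 'q \<Rightarrow> 'q) \<Rightarrow> 'q \<Rightarrow> 'q \<Rightarrow> 'q set" where
  "DQ m p q = {u. m (rres m u p) p = u \<and> u = m q (lres m q u)}"

text \<open>A Q-subset is a carrier set A together with a map h : A -> Q.
  A Q-relation from (A,hA) to (B,hB) is represented extensionally (bot outside carriers).\<close>
definition Qrel :: "('q::complete_lattice \<Rightarrow> 'q \<Rightarrow> 'q) \<Rightarrow> 'a set \<Rightarrow> ('a \<Rightarrow> 'q) \<Rightarrow> 'b set \<Rightarrow> ('b \<Rightarrow> 'q)
   \<Rightarrow> ('a \<Rightarrow> 'b \<Rightarrow> 'q) \<Rightarrow> bool" where
  "Qrel m A hA B hB phi \<longleftrightarrow>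
     (\<forall>x\<in>A. \<forall>y\<in>B. phi x y \<in> DQ m (hA x) (hB y)) \<and>
     (\<forall>x y. x \<notin> A \<or> y \<notin> B \<longrightarrow> phi x y = bot)"

definition Qcomp :: "('q::complete_lattice \<Rightarrow> 'q \<Rightarrow> 'q) \<Rightarrow> 'a set \<Rightarrow> 'b set \<Rightarrow> ('b \<Rightarrow> 'q) \<Rightarrow> 'c set
   \<Rightarrow> ('b \<Rightarrow> 'c \<Rightarrow> 'q) \<Rightarrow> ('a \<Rightarrow> 'b \<Rightarrow> 'q) \<Rightarrow> ('a \<Rightarrow> 'c \<Rightarrow> 'q)" where
  "Qcomp m A B hB C psi phi = (\<lambda>x z. if x \<in> A \<and> z \<in> C
      then Sup {m (rres m (psi y z) (hB y)) (phi x y) | y. y \<in> B} else bot)"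

definition Qid :: "'a set \<Rightarrow> ('a \<Rightarrow> 'q::complete_lattice) \<Rightarrow> 'a \<Rightarrow> 'a \<Rightarrow> 'q" where
  "Qid A h = (\<lambda>x y. if x \<in> A \<and> x = y then h x else bot)"

definition Qpreord :: "('q::complete_lattice \<Rightarrow> 'q \<Rightarrow> 'q) \<Rightarrow> 'a set \<Rightarrow> ('a \<Rightarrow> 'q) \<Rightarrow> ('a \<Rightarrow> 'a \<Rightarrow> 'q) \<Rightarrow> bool" where
  "Qpreord m A h R \<longleftrightarrow> Qrel m A h A h R \<and> Qid A h \<le> R \<and> Qcomp m A A h A R R \<le> R"

definition Qdist :: "('q::complete_lattice \<Rightarrow> 'q \<Rightarrow> 'q) \<Rightarrow> 'a set \<Rightarrow> ('a \<Rightarrow> 'q) \<Rightarrow> ('a \<Rightarrow> 'a \<Rightarrow> 'q)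
   \<Rightarrow> 'b set \<Rightarrow> ('b \<Rightarrow> 'q) \<Rightarrow> ('b \<Rightarrow> 'b \<Rightarrow> 'q) \<Rightarrow> ('a \<Rightarrow> 'b \<Rightarrow> 'q) \<Rightarrow> bool" where
  "Qdist m A hA RA B hB RB phi \<longleftrightarrow> Qrel m A hA B hB phi \<and>
     Qcomp m A B hB B RB (Qcomp m A A hA B phi RA) \<le> phi"

definition Qext :: "('q::complete_lattice \<Rightarrow> 'q \<Rightarrow> 'q) \<Rightarrow> 'a set \<Rightarrow> ('a \<Rightarrow> 'q) \<Rightarrow> 'b set \<Rightarrow> ('b \<Rightarrow> 'q)
   \<Rightarrow> 'c set \<Rightarrow> ('c \<Rightarrow> 'q) \<Rightarrow> ('a \<Rightarrow> 'c \<Rightarrow> 'q) \<Rightarrow> ('a \<Rightarrow> 'b \<Rightarrow> 'q) \<Rightarrow> ('b \<Rightarrow> 'c \<Rightarrow> 'q)" where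
  "Qext m A hA B hB C hC xi phi =
     (GREATEST psi'. Qrel m B hB C hC psi' \<and> Qcomp m A B hB C psi' phi \<le> xi)"

definition Qlift :: "('q::complete_lattice \<Rightarrow> 'q \<Rightarrow> 'q) \<Rightarrow> 'a set \<Rightarrow> ('a \<Rightarrow> 'q) \<Rightarrow> 'b set \<Rightarrow> ('b \<Rightarrow> 'q)
   \<Rightarrow> 'c set \<Rightarrow> ('c \<Rightarrow> 'q) \<Rightarrow> ('b \<Rightarrow> 'c \<Rightarrow> 'q) \<Rightarrow> ('a \<Rightarrow> 'c \<Rightarrow> 'q) \<Rightarrow> ('a \<Rightarrow> 'b \<Rightarrow> 'q)" where
  "Qlift m A hA B hB C hC psi xi =
     (GREATEST phi'. Qrel m A hA B hB phi' \<and> Qcomp m A B hB C psi phi' \<le> xi)"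

text \<open>The one-point Q-subset 1_q is the type unit with carrier UNIV and height q.
  Elements of P X / P^dagger X are pairs (q, mu) recording the codomain/domain 1_q.\<close>
definition PX :: "('q::complete_lattice \<Rightarrow> 'q \<Rightarrow> 'q) \<Rightarrow> 'a set \<Rightarrow> ('a \<Rightarrow> 'q) \<Rightarrow> ('a \<Rightarrow> 'a \<Rightarrow> 'q)
   \<Rightarrow> ('q \<times> ('a \<Rightarrow> unit \<Rightarrow> 'q)) set" where
  "PX m A h R = {(q, mu). Qrel m A h (UNIV::unit set) (\<lambda>_. q) mu \<and>
                          Qcomp m A A h (UNIV::unit set) mu R \<le> mu}"

definition PdX :: "('q::complete_lattice \<Rightarrow> 'q \<Rightarrow> 'q) \<Rightarrow> 'a set \<Rightarrow> ('a \<Rightarrow> 'q) \<Rightarrow> ('a \<Rightarrow> 'a \<Rightarrow> 'q)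
   \<Rightarrow> ('q \<times> (unit \<Rightarrow> 'a \<Rightarrow> 'q)) set" where
  "PdX m A h R = {(q, la). Qrel m (UNIV::unit set) (\<lambda>_. q) A h la \<and>
                          Qcomp m (UNIV::unit set) A h A R la \<le> la}"

definition Qup :: "('q::complete_lattice \<Rightarrow> 'q \<Rightarrow> 'q) \<Rightarrow> 'a set \<Rightarrow> ('a \<Rightarrow> 'q) \<Rightarrow> 'b set \<Rightarrow> ('b \<Rightarrow> 'q)
   \<Rightarrow> ('a \<Rightarrow> 'b \<Rightarrow> 'q) \<Rightarrow> 'q \<times> ('a \<Rightarrow> unit \<Rightarrow> 'q) \<Rightarrow> 'q \<times> (unit \<Rightarrow> 'b \<Rightarrow> 'q)" where
  "Qup m A hA B hB phi = (\<lambda>(q, mu). (q, Qext m A hA (UNIV::unit set) (\<lambda>_. q) B hB phi mu))"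

definition Qdown :: "('q::complete_lattice \<Rightarrow> 'q \<Rightarrow> 'q) \<Rightarrow> 'a set \<Rightarrow> ('a \<Rightarrow> 'q) \<Rightarrow> 'b set \<Rightarrow> ('b \<Rightarrow> 'q)
   \<Rightarrow> ('a \<Rightarrow> 'b \<Rightarrow> 'q) \<Rightarrow> 'q \<times> (unit \<Rightarrow> 'b \<Rightarrow> 'q) \<Rightarrow> 'q \<times> ('a \<Rightarrow> unit \<Rightarrow> 'q)" where
  "Qdown m A hA B hB phi = (\<lambda>(q, la). (q, Qlift m A hA (UNIV::unit set) (\<lambda>_. q) B hB la phi))"

definition Qstar :: "('q::complete_lattice \<Rightarrow> 'q \<Rightarrow> 'q) \<Rightarrow> 'a set \<Rightarrow> 'b set \<Rightarrow> ('b \<Rightarrow> 'q)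
   \<Rightarrow> ('a \<Rightarrow> 'b \<Rightarrow> 'q) \<Rightarrow> 'q \<times> ('b \<Rightarrow> unit \<Rightarrow> 'q) \<Rightarrow> 'q \<times> ('a \<Rightarrow> unit \<Rightarrow> 'q)" where
  "Qstar m A B hB phi = (\<lambda>(q, mu). (q, Qcomp m A B hB (UNIV::unit set) mu phi))"

definition Qdag :: "('q::complete_lattice \<Rightarrow> 'q \<Rightarrow> 'q) \<Rightarrow> 'a set \<Rightarrow> ('a \<Rightarrow> 'q) \<Rightarrow> 'b set
   \<Rightarrow> ('a \<Rightarrow> 'b \<Rightarrow> 'q) \<Rightarrow> 'q \<times> (unit \<Rightarrow> 'a \<Rightarrow> 'q) \<Rightarrow> 'q \<times> (unit \<Rightarrow> 'b \<Rightarrow> 'q)" where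
  "Qdag m A hA B phi = (\<lambda>(q, la). (q, Qcomp m (UNIV::unit set) A hA B phi la))"

end

theory Submission
  imports Defs
begin

lemma uq_mono2:
  assumes "unital_quantale m e" "b \<le> c" shows "m a b \<le> m a c"
proof -
  have "m a (Sup {b, c}) = Sup ((\<lambda>x. m a x) ` {b, c})"
    using assms(1) unfolding unital_quantale_def by blast
  moreover have "Sup {b, c} = c" using assms(2) by (simp add: sup_absorb2)
  ultimately have "m a c = sup (m a b) (m a c)" by simp
  then show ?thesis by (metis sup.cobounded1)
qed

lemma uq_mono1:
  assumes "unital_quantale m e" "b \<le> c" shows "m b a \<le> m c a"
proof -
  have "m (Sup {b, c}) a = Sup ((\<lambda>x. m x a) ` {b, c})"
    using assms(1) unfolding unital_quantale_def by blast
  moreover have "Sup {b, c} = c" using assms(2) by (simp add: sup_absorb2)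
  ultimately have "m c a = sup (m b a) (m c a)" by simp
  then show ?thesis by (metis sup.cobounded1)
qed

lemma uq_unit: "unital_quantale m e \<Longrightarrow> m e a = a"
  unfolding unital_quantale_def by blast

lemma rres_upper:
  "m p q \<le> r \<Longrightarrow> p \<le> rres m r q"
  unfolding rres_def by (rule Sup_upper) simp

lemma e_rres:
  assumes "unital_quantale m e" "q \<le> r" shows "e \<le> rres m r q"
  using assms by (intro rres_upper) (simp add: uq_unit)

lemma id_le_R:
  assumes "Qid A h \<le> R" "x \<in> A" shows "h x \<le> R x x"
proof -
  have "Qid A h x x \<le> R x x" using assms(1) by (simp add: le_fun_def)
  then show ?thesis using assms(2) by (simp add: Qid_def)
qed

lemma preord_id: "Qpreord m A h R \<Longrightarrow> Qid A h \<le> R"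
  unfolding Qpreord_def by blast

lemma le_comp_id:
  assumes uq: "unital_quantale m e" and idr: "Qid B hB \<le> RB" and y: "y \<in> B" and x: "x \<in> A"
  shows "xi x y \<le> Qcomp m A B hB B RB xi x y"
proof -
  have "hB y \<le> RB y y" using id_le_R[OF idr y] .
  then have "e \<le> rres m (RB y y) (hB y)" using uq e_rres by blast
  then have "xi x y \<le> m (rres m (RB y y) (hB y)) (xi x y)"
    using uq_mono1[OF uq \<open>e \<le> rres m (RB y y) (hB y)\<close>, of "xi x y"] uq_unit[OF uq, of "xi x y"] by simp
  also have "\<dots> \<le> Sup {m (rres m (RB b y) (hB b)) (xi x b) | b. b \<in> B}"
    by (rule Sup_upper) (use y in blast)
  finally show ?thesis using x y unfolding Qcomp_def by simp
qed

lemma le_comp_idR: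
  assumes uq: "unital_quantale m e" and idr: "Qid A hA \<le> RA" and rel: "Qrel m A hA B hB phi"
  shows "phi \<le> Qcomp m A A hA B phi RA"
proof (rule le_funI, rule le_funI)
  fix x y
  show "phi x y \<le> Qcomp m A A hA B phi RA x y"
  proof (cases "x \<in> A \<and> y \<in> B")
    case True
    have "hA x \<le> RA x x" using id_le_R[OF idr] True by blast
    have "phi x y \<in> DQ m (hA x) (hB y)" using rel True unfolding Qrel_def by blast
    then have "phi x y = m (rres m (phi x y) (hA x)) (hA x)" unfolding DQ_def by simp
    also have "\<dots> \<le> m (rres m (phi x y) (hA x)) (RA x x)"
      by (rule uq_mono2[OF uq \<open>hA x \<le> RA x x\<close>])
    also have "\<dots> \<le> Sup {m (rres m (phi a y) (hA a)) (RA x a) | a. a \<in> A}"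
      by (rule Sup_upper) (use True in blast)
    finally show ?thesis using True unfolding Qcomp_def by simp
  next
    case False
    then have "phi x y = bot" using rel unfolding Qrel_def by blast
    then show ?thesis by simp
  qed
qed

lemma Qcomp_mono2:
  assumes uq: "unital_quantale m e" and "f \<le> g"
  shows "Qcomp m A B hB C psi f \<le> Qcomp m A B hB C psi g"
proof (rule le_funI, rule le_funI)
  fix x z
  show "Qcomp m A B hB C psi f x z \<le> Qcomp m A B hB C psi g x z"
  proof (cases "x \<in> A \<and> z \<in> C")
    case True
    have "Sup {m (rres m (psi y z) (hB y)) (f x y) | y. y \<in> B}
        \<le> Sup {m (rres m (psi y z) (hB y)) (g x y) | y. y \<in> B}"
    proof (rule Sup_least)
      fix t assume "t \<in> {m (rres m (psi y z) (hB y)) (f x y) | y. y \<in> B}"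
      then obtain y where y: "y \<in> B" "t = m (rres m (psi y z) (hB y)) (f x y)" by blast
      have "t \<le> m (rres m (psi y z) (hB y)) (g x y)"
        using y(2) uq_mono2[OF uq, of "f x y" "g x y"] assms(2) by (simp add: le_fun_def)
      also have "\<dots> \<le> Sup {m (rres m (psi y z) (hB y)) (g x y) | y. y \<in> B}"
        by (rule Sup_upper) (use y in blast)
      finally show "t \<le> \<dots>" .
    qed
    then show ?thesis using True unfolding Qcomp_def by simp
  next
    case False then show ?thesis unfolding Qcomp_def by auto
  qed
qed

lemma dist_right:
  assumes uq: "unital_quantale m e" and pA: "Qpreord m A hA RA" and pB: "Qpreord m B hB RB"
    and d: "Qdist m A hA RA B hB RB phi" and x: "x \<in> A" and y: "y \<in> B"
  shows "Qcomp m A A hA B phi RA x y \<le> phi x y"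
proof -
  have "Qcomp m A A hA B phi RA x y \<le> Qcomp m A B hB B RB (Qcomp m A A hA B phi RA) x y"
    using le_comp_id[OF uq _ y x] pB unfolding Qpreord_def by blast
  also have "\<dots> \<le> phi x y" using d unfolding Qdist_def le_fun_def by blast
  finally show ?thesis .
qed

lemma dist_left:
  assumes uq: "unital_quantale m e" and pA: "Qpreord m A hA RA" and pB: "Qpreord m B hB RB"
    and d: "Qdist m A hA RA B hB RB phi" and x: "x \<in> A" and y: "y \<in> B"
  shows "Qcomp m A B hB B RB phi x y \<le> phi x y"
proof -
  have "phi \<le> Qcomp m A A hA B phi RA"
    using le_comp_idR[OF uq] pA d unfolding Qpreord_def Qdist_def by blast
  then have "Qcomp m A B hB B RB phi \<le> Qcomp m A B hB B RB (Qcomp m A A hA B phi RA)"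
    using Qcomp_mono2[OF uq] by blast
  also have "\<dots> \<le> phi" using d unfolding Qdist_def by blast
  finally show ?thesis unfolding le_fun_def by blast
qed

lemma unit_set: "{f u | u::unit. u \<in> UNIV} = {f ()}" by auto


lemma phi_eqI:
  assumes "Qrel m A hA B hB phi" "Qrel m A hA B hB psi"
    and "\<And>x y. x \<in> A \<Longrightarrow> y \<in> B \<Longrightarrow> phi x y = psi x y"
  shows "phi = psi"
proof (rule ext, rule ext)
  fix x y show "phi x y = psi x y"
    using assms unfolding Qrel_def by (cases "x \<in> A \<and> y \<in> B") auto
qed

lemma star_rep:
  assumes uq: "unital_quantale m e" and pA: "Qpreord m A hA RA" and pB: "Qpreord m B hB RB"
    and d: "Qdist m A hA RA B hB RB phi" and x: "x \<in> A" and y: "y \<in> B"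
  shows "Qcomp m A B hB (UNIV::unit set) (\<lambda>b _. RB b y) phi x u = phi x y"
proof -
  have eq: "Qcomp m A B hB (UNIV::unit set) (\<lambda>b _. RB b y) phi x u = Qcomp m A B hB B RB phi x y"
    using x y unfolding Qcomp_def by simp
  have "hB y \<le> RB y y" using id_le_R[OF preord_id[OF pB] y] .
  have "phi x y \<le> Qcomp m A B hB B RB phi x y"
    using le_comp_id[OF uq _ y x] pB unfolding Qpreord_def by blast
  moreover have "Qcomp m A B hB B RB phi x y \<le> phi x y" using dist_left[OF assms] .
  ultimately show ?thesis using eq by simp
qed

lemma star_mem:
  assumes pB: "Qpreord m B hB RB" and y: "y \<in> B"
  shows "(hB y, \<lambda>b _. RB b y) \<in> PX m B hB RB"
proof -
  have r: "Qrel m B hB B hB RB" and t: "Qcomp m B B hB B RB RB \<le> RB"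
    using pB unfolding Qpreord_def by auto
  have "Qrel m B hB (UNIV::unit set) (\<lambda>_. hB y) (\<lambda>b _. RB b y)"
    using r y unfolding Qrel_def by auto
  moreover have "Qcomp m B B hB (UNIV::unit set) (\<lambda>b _. RB b y) RB \<le> (\<lambda>b _. RB b y)"
  proof (rule le_funI, rule le_funI)
    fix b and u :: unit
    show "Qcomp m B B hB UNIV (\<lambda>b _. RB b y) RB b u \<le> RB b y"
    proof (cases "b \<in> B")
      case True
      have "Qcomp m B B hB UNIV (\<lambda>b _. RB b y) RB b u = Qcomp m B B hB B RB RB b y"
        using True y unfolding Qcomp_def by simp
      also have "\<dots> \<le> RB b y" using t unfolding le_fun_def by blast
      finally show ?thesis .
    next
      case False then show ?thesis unfolding Qcomp_def by auto
    qed
  qed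
  ultimately show ?thesis unfolding PX_def by auto
qed

lemma dag_rep:
  assumes uq: "unital_quantale m e" and pA: "Qpreord m A hA RA" and pB: "Qpreord m B hB RB"
    and d: "Qdist m A hA RA B hB RB phi" and x: "x \<in> A" and y: "y \<in> B"
  shows "Qcomp m (UNIV::unit set) A hA B phi (\<lambda>_ a. RA x a) u y = phi x y"
proof -
  have eq: "Qcomp m (UNIV::unit set) A hA B phi (\<lambda>_ a. RA x a) u y = Qcomp m A A hA B phi RA x y"
    using x y unfolding Qcomp_def by simp
  have "phi \<le> Qcomp m A A hA B phi RA"
    using le_comp_idR[OF uq] pA d unfolding Qpreord_def Qdist_def by blast
  then have "phi x y \<le> Qcomp m A A hA B phi RA x y" unfolding le_fun_def by blast
  moreover have "Qcomp m A A hA B phi RA x y \<le> phi x y" using dist_right[OF assms] .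
  ultimately show ?thesis using eq by simp
qed

lemma dag_mem:
  assumes pA: "Qpreord m A hA RA" and x: "x \<in> A"
  shows "(hA x, \<lambda>_ a. RA x a) \<in> PdX m A hA RA"
proof -
  have r: "Qrel m A hA A hA RA" and t: "Qcomp m A A hA A RA RA \<le> RA"
    using pA unfolding Qpreord_def by auto
  have "Qrel m (UNIV::unit set) (\<lambda>_. hA x) A hA (\<lambda>_ a. RA x a)"
    using r x unfolding Qrel_def by auto
  moreover have "Qcomp m (UNIV::unit set) A hA A RA (\<lambda>_ a. RA x a) \<le> (\<lambda>_ a. RA x a)"
  proof (rule le_funI, rule le_funI)
    fix a and u :: unit
    show "Qcomp m UNIV A hA A RA (\<lambda>_ a. RA x a) u a \<le> RA x a"
    proof (cases "a \<in> A")
      case True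
      have "Qcomp m UNIV A hA A RA (\<lambda>_ a. RA x a) u a = Qcomp m A A hA A RA RA x a"
        using True x unfolding Qcomp_def by simp
      also have "\<dots> \<le> RA x a" using t unfolding le_fun_def by blast
      finally show ?thesis .
    next
      case False then show ?thesis unfolding Qcomp_def by auto
    qed
  qed
  ultimately show ?thesis unfolding PdX_def by auto
qed

lemma up_rep:
  fixes m :: "'q::complete_lattice \<Rightarrow> 'q \<Rightarrow> 'q" and phi :: "'a \<Rightarrow> 'b \<Rightarrow> 'q"
  assumes uq: "unital_quantale m e" and pA: "Qpreord m A hA RA" and pB: "Qpreord m B hB RB"
    and d: "Qdist m A hA RA B hB RB phi" and x: "x \<in> A"
  shows "Qext m A hA (UNIV::unit set) (\<lambda>_. hA x) B hB phi (\<lambda>a _. RA a x) = (\<lambda>_ b. phi x b)"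
  unfolding Qext_def
proof (rule Greatest_equality)
  have rel: "Qrel m A hA B hB phi" using d unfolding Qdist_def by blast
  show "Qrel m UNIV (\<lambda>_. hA x) B hB (\<lambda>_ b. phi x b) \<and>
    Qcomp m A UNIV (\<lambda>_. hA x) B (\<lambda>_ b. phi x b) (\<lambda>a _. RA a x) \<le> phi"
  proof
    show "Qrel m UNIV (\<lambda>_. hA x) B hB (\<lambda>_ b. phi x b)"
      using rel x unfolding Qrel_def by auto
    show "Qcomp m A UNIV (\<lambda>_. hA x) B (\<lambda>_ b. phi x b) (\<lambda>a _. RA a x) \<le> phi"
    proof (rule le_funI, rule le_funI)
      fix a b
      show "Qcomp m A UNIV (\<lambda>_. hA x) B (\<lambda>_ b. phi x b) (\<lambda>a _. RA a x) a b \<le> phi a b"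
      proof (cases "a \<in> A \<and> b \<in> B")
        case True
        have "Qcomp m A UNIV (\<lambda>_. hA x) B (\<lambda>_ b. phi x b) (\<lambda>a _. RA a x) a b
              = m (rres m (phi x b) (hA x)) (RA a x)"
          using True unfolding Qcomp_def by (simp add: unit_set)
        also have "\<dots> \<le> Sup {m (rres m (phi a' b) (hA a')) (RA a a') | a'. a' \<in> A}"
          by (rule Sup_upper) (use x in blast)
        also have "\<dots> = Qcomp m A A hA B phi RA a b" using True unfolding Qcomp_def by simp
        also have "\<dots> \<le> phi a b" using dist_right[OF uq pA pB d] True by blast
        finally show ?thesis .
      next
        case False then show ?thesis unfolding Qcomp_def by auto
      qed
    qed
  qed
next
  fix f :: "unit \<Rightarrow> 'b \<Rightarrow> 'q"
  assume P: "Qrel m UNIV (\<lambda>_. hA x) B hB f \<and>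
    Qcomp m A UNIV (\<lambda>_. hA x) B f (\<lambda>a _. RA a x) \<le> phi"
  show "f \<le> (\<lambda>_ b. phi x b)"
  proof (rule le_funI, rule le_funI)
    fix u :: unit and b
    show "f u b \<le> phi x b"
    proof (cases "b \<in> B")
      case True
      have "hA x \<le> RA x x" using id_le_R[OF preord_id[OF pA] x] .
      have "f u b \<in> DQ m (hA x) (hB b)" using P True unfolding Qrel_def by blast
      then have "f u b = m (rres m (f u b) (hA x)) (hA x)" unfolding DQ_def by simp
      also have "\<dots> \<le> m (rres m (f u b) (hA x)) (RA x x)"
        by (rule uq_mono2[OF uq \<open>hA x \<le> RA x x\<close>])
      also have "\<dots> = Qcomp m A UNIV (\<lambda>_. hA x) B f (\<lambda>a _. RA a x) x b"
        using True x unfolding Qcomp_def by (simp add: unit_set)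
      also have "\<dots> \<le> phi x b" using P unfolding le_fun_def by blast
      finally show ?thesis .
    next
      case False then have "f u b = bot" using P unfolding Qrel_def by blast
      then show ?thesis by simp
    qed
  qed
qed

lemma up_mem:
  assumes pA: "Qpreord m A hA RA" and x: "x \<in> A"
  shows "(hA x, \<lambda>a _. RA a x) \<in> PX m A hA RA"
  using star_mem[OF pA x] .

lemma down_rep:
  fixes m :: "'q::complete_lattice \<Rightarrow> 'q \<Rightarrow> 'q" and phi :: "'a \<Rightarrow> 'b \<Rightarrow> 'q"
  assumes uq: "unital_quantale m e" and pA: "Qpreord m A hA RA" and pB: "Qpreord m B hB RB"
    and d: "Qdist m A hA RA B hB RB phi" and y: "y \<in> B"
  shows "Qlift m A hA (UNIV::unit set) (\<lambda>_. hB y) B hB (\<lambda>_ b. RB y b) phi = (\<lambda>a _. phi a y)"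
  unfolding Qlift_def
proof (rule Greatest_equality)
  have rel: "Qrel m A hA B hB phi" using d unfolding Qdist_def by blast
  show "Qrel m A hA UNIV (\<lambda>_. hB y) (\<lambda>a _. phi a y) \<and>
    Qcomp m A UNIV (\<lambda>_. hB y) B (\<lambda>_ b. RB y b) (\<lambda>a _. phi a y) \<le> phi"
  proof
    show "Qrel m A hA UNIV (\<lambda>_. hB y) (\<lambda>a _. phi a y)"
      using rel y unfolding Qrel_def by auto
    show "Qcomp m A UNIV (\<lambda>_. hB y) B (\<lambda>_ b. RB y b) (\<lambda>a _. phi a y) \<le> phi"
    proof (rule le_funI, rule le_funI)
      fix a b
      show "Qcomp m A UNIV (\<lambda>_. hB y) B (\<lambda>_ b. RB y b) (\<lambda>a _. phi a y) a b \<le> phi a b"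
      proof (cases "a \<in> A \<and> b \<in> B")
        case True
        have "Qcomp m A UNIV (\<lambda>_. hB y) B (\<lambda>_ b. RB y b) (\<lambda>a _. phi a y) a b
              = m (rres m (RB y b) (hB y)) (phi a y)"
          using True unfolding Qcomp_def by (simp add: unit_set)
        also have "\<dots> \<le> Sup {m (rres m (RB y' b) (hB y')) (phi a y') | y'. y' \<in> B}"
          by (rule Sup_upper) (use y in blast)
        also have "\<dots> = Qcomp m A B hB B RB phi a b" using True unfolding Qcomp_def by simp
        also have "\<dots> \<le> phi a b" using dist_left[OF uq pA pB d] True by blast
        finally show ?thesis .
      next
        case False then show ?thesis unfolding Qcomp_def by auto
      qed
    qed
  qed
next
  fix f :: "'a \<Rightarrow> unit \<Rightarrow> 'q"
  assume P: "Qrel m A hA UNIV (\<lambda>_. hB y) f \<and>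
    Qcomp m A UNIV (\<lambda>_. hB y) B (\<lambda>_ b. RB y b) f \<le> phi"
  show "f \<le> (\<lambda>a _. phi a y)"
  proof (rule le_funI, rule le_funI)
    fix u :: unit and a
    show "f a u \<le> phi a y"
    proof (cases "a \<in> A")
      case True
      have "hB y \<le> RB y y" using id_le_R[OF preord_id[OF pB] y] .
      then have "e \<le> rres m (RB y y) (hB y)" using uq e_rres by blast
      then have "f a u \<le> m (rres m (RB y y) (hB y)) (f a u)"
        using uq_mono1[OF uq \<open>e \<le> rres m (RB y y) (hB y)\<close>, of "f a u"] uq_unit[OF uq, of "f a u"] by simp
      also have "\<dots> = Qcomp m A UNIV (\<lambda>_. hB y) B (\<lambda>_ b. RB y b) f a y"
        using True y unfolding Qcomp_def by (simp add: unit_set)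
      also have "\<dots> \<le> phi a y" using P unfolding le_fun_def by blast
      finally show ?thesis .
    next
      case False then have "f a u = bot" using P unfolding Qrel_def by blast
      then show ?thesis by simp
    qed
  qed
qed

lemma down_mem:
  assumes pB: "Qpreord m B hB RB" and y: "y \<in> B"
  shows "(hB y, \<lambda>_ b. RB y b) \<in> PdX m B hB RB"
  using dag_mem[OF pB y] .

theorem proposition4p21:
  fixes m :: "'q::complete_lattice \<Rightarrow> 'q \<Rightarrow> 'q" and e :: 'q
    and A :: "'a set" and hA :: "'a \<Rightarrow> 'q" and RA :: "'a \<Rightarrow> 'a \<Rightarrow> 'q"
    and B :: "'b set" and hB :: "'b \<Rightarrow> 'q" and RB :: "'b \<Rightarrow> 'b \<Rightarrow> 'q"
    and phi psi :: "'a \<Rightarrow> 'b \<Rightarrow> 'q"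
  assumes "unital_quantale m e"
    and "Qpreord m A hA RA" and "Qpreord m B hB RB"
    and "Qdist m A hA RA B hB RB phi" and "Qdist m A hA RA B hB RB psi"
  shows "(phi = psi \<longleftrightarrow>
            (\<forall>p\<in>PX m A hA RA. Qup m A hA B hB phi p = Qup m A hA B hB psi p))
       \<and> ((\<forall>p\<in>PX m A hA RA. Qup m A hA B hB phi p = Qup m A hA B hB psi p) \<longleftrightarrow>
            (\<forall>p\<in>PdX m B hB RB. Qdown m A hA B hB phi p = Qdown m A hA B hB psi p))
       \<and> ((\<forall>p\<in>PdX m B hB RB. Qdown m A hA B hB phi p = Qdown m A hA B hB psi p) \<longleftrightarrow>
            (\<forall>p\<in>PX m B hB RB. Qstar m A B hB phi p = Qstar m A B hB psi p))
       \<and> ((\<forall>p\<in>PX m B hB RB. Qstar m A B hB phi p = Qstar m A B hB psi p) \<longleftrightarrow>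
            (\<forall>p\<in>PdX m A hA RA. Qdag m A hA B phi p = Qdag m A hA B psi p))"
proof -
  note uq = assms(1) and pA = assms(2) and pB = assms(3) and d1 = assms(4) and d2 = assms(5)
  have r1: "Qrel m A hA B hB phi" using d1 unfolding Qdist_def by blast
  have r2: "Qrel m A hA B hB psi" using d2 unfolding Qdist_def by blast
  have U: "(\<forall>p\<in>PX m A hA RA. Qup m A hA B hB phi p = Qup m A hA B hB psi p) \<longleftrightarrow> phi = psi"
  proof
    assume H: "\<forall>p\<in>PX m A hA RA. Qup m A hA B hB phi p = Qup m A hA B hB psi p"
    show "phi = psi"
    proof (rule phi_eqI[OF r1 r2])
      fix x y assume x: "x \<in> A" and y: "y \<in> B"
      have "Qup m A hA B hB phi (hA x, \<lambda>a _. RA a x) = Qup m A hA B hB psi (hA x, \<lambda>a _. RA a x)"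
        using H up_mem[OF pA x] by blast
      then have "(\<lambda>(_::unit) b. phi x b) = (\<lambda>_ b. psi x b)"
        unfolding Qup_def using up_rep[OF uq pA pB d1 x] up_rep[OF uq pA pB d2 x] by simp
      then have "(\<lambda>(_::unit) b. phi x b) () y = (\<lambda>_ b. psi x b) () y" by (rule fun_cong[OF fun_cong])
      then show "phi x y = psi x y" by simp
    qed
  qed simp
  have D: "(\<forall>p\<in>PdX m B hB RB. Qdown m A hA B hB phi p = Qdown m A hA B hB psi p) \<longleftrightarrow> phi = psi"
  proof
    assume H: "\<forall>p\<in>PdX m B hB RB. Qdown m A hA B hB phi p = Qdown m A hA B hB psi p"
    show "phi = psi"
    proof (rule phi_eqI[OF r1 r2])
      fix x y assume x: "x \<in> A" and y: "y \<in> B"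
      have "Qdown m A hA B hB phi (hB y, \<lambda>_ b. RB y b) = Qdown m A hA B hB psi (hB y, \<lambda>_ b. RB y b)"
        using H down_mem[OF pB y] by blast
      then have "(\<lambda>a (_::unit). phi a y) = (\<lambda>a _. psi a y)"
        unfolding Qdown_def using down_rep[OF uq pA pB d1 y] down_rep[OF uq pA pB d2 y] by simp
      then have "(\<lambda>a (_::unit). phi a y) x () = (\<lambda>a _. psi a y) x ()" by (rule fun_cong[OF fun_cong]) 
      then show "phi x y = psi x y" by simp
    qed
  qed simp
  have S: "(\<forall>p\<in>PX m B hB RB. Qstar m A B hB phi p = Qstar m A B hB psi p) \<longleftrightarrow> phi = psi"
  proof
    assume H: "\<forall>p\<in>PX m B hB RB. Qstar m A B hB phi p = Qstar m A B hB psi p"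
    show "phi = psi"
    proof (rule phi_eqI[OF r1 r2])
      fix x y assume x: "x \<in> A" and y: "y \<in> B"
      have "Qstar m A B hB phi (hB y, \<lambda>b _. RB b y) = Qstar m A B hB psi (hB y, \<lambda>b _. RB b y)"
        using H star_mem[OF pB y] by blast
      then have "Qcomp m A B hB (UNIV::unit set) (\<lambda>b _. RB b y) phi x ()
               = Qcomp m A B hB (UNIV::unit set) (\<lambda>b _. RB b y) psi x ()"
        unfolding Qstar_def by simp
      then show "phi x y = psi x y"
        using star_rep[OF uq pA pB d1 x y] star_rep[OF uq pA pB d2 x y] by simp
    qed
  qed simp
  have G: "(\<forall>p\<in>PdX m A hA RA. Qdag m A hA B phi p = Qdag m A hA B psi p) \<longleftrightarrow> phi = psi"
  proof
    assume H: "\<forall>p\<in>PdX m A hA RA. Qdag m A hA B phi p = Qdag m A hA B psi p"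
    show "phi = psi"
    proof (rule phi_eqI[OF r1 r2])
      fix x y assume x: "x \<in> A" and y: "y \<in> B"
      have "Qdag m A hA B phi (hA x, \<lambda>_ a. RA x a) = Qdag m A hA B psi (hA x, \<lambda>_ a. RA x a)"
        using H dag_mem[OF pA x] by blast
      then have "Qcomp m (UNIV::unit set) A hA B phi (\<lambda>_ a. RA x a) () y
               = Qcomp m (UNIV::unit set) A hA B psi (\<lambda>_ a. RA x a) () y"
        unfolding Qdag_def by simp
      then show "phi x y = psi x y"
        using dag_rep[OF uq pA pB d1 x y] dag_rep[OF uq pA pB d2 x y] by simp
    qed
  qed simp
  show ?thesis using U D S G by blast
qed

end
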